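(* $$ \begin{aligned} & \log\mathcal C_2\left(\tfrac14\right)=\frac{\log2}{8}-\frac{G}{2\pi}, \\ &\log\mathcal C_3\left(\tfrac14\right)=\frac{\log2}{32}-\frac{G}{4\pi}+\frac{7\zeta_E(3)}{16\pi^2}, \\ &\log\mathcal C_4\left(\tfrac14\right)=\frac{\log2}{128}-\frac{3G}{32\pi}-\frac{3\zeta_E(3)}{64\pi^2}+\frac{3\beta(4)}{4\pi^3}, \\ &\log\mathcal C_5\left(\tfrac14\right)=\frac{\log2}{512}-\frac{G}{32\pi}-\frac{3\zeta_E(3)}{128\pi^2}+\frac{3\beta(4)}{4\pi^3}-\frac{93\zeta_E(5)}{64\pi^4}. \end{aligned} $$
   Context: For an integer $r\ge2$ let $P_r(y)=(1-y)\exp\left(y+\frac{y^2}{2}+\cdots+\frac{y^r}{r}\right)$. The multiple cosine function of Kurokawa–Koyama of order $r\ge2$ is $\mathcal C_r(x)=\prod_{n\ge1,\ n\text{ odd}}\left\{P_r\left(\frac{x}{n/2}\right)P_r\left(-\frac{x}{n/2}\right)^{(-1)^{r-1}}\right\}^{(n/2)^{r-1}}$, interpreted as $\mathcal C_r(x)=\exp\Big(\sum_{n\ge1,\,n\text{ odd}}(n/2)^{r-1}\big[\operatorname{Log}P_r(2x/n)+(-1)^{r-1}\operatorname{Log}P_r(-2x/n)\big]\Big)$, where $\operatorname{Log}P_r(y):=\operatorname{Log}(1-y)+y+\frac{y^2}{2}+\cdots+\frac{y^r}{r}$ with $\operatorname{Log}$ the principal branch. The series converges and defines a holomorphic function on $D=\mathbb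 C\setminus\big((-\infty,-\tfrac12]\cup[\tfrac12,\infty)\big)$, positive on $(-\tfrac12,\tfrac12)$; $\log\mathcal C_r(x)$ denotes the exponent above (the real logarithm for real $|x|<\tfrac12$). $\zeta_E(s)=\sum_{n=1}^\infty\frac{(-1)^{n+1}}{n^s}$, $\beta(s)=\sum_{n=0}^\infty\frac{(-1)^n}{(2n+1)^s}$, and $G=\beta(2)$ is Catalan's constant. *)

theory Defs
  imports "HOL-Analysis.Analysis"
begin

definition LogP :: "nat \<Rightarrow> complex \<Rightarrow> complex" where
  "LogP r y = Ln (1 - y) + (\<Sum>k=1..r. y ^ k / of_nat k)"

definition logC :: "nat \<Rightarrow> complex \<Rightarrow> complex" where
  "logC r x = (\<Sum>m. (of_nat (2*m+1) / 2) ^ (r - 1) *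
      (LogP r (2 * x / of_nat (2*m+1)) +
       (-1) ^ (r - 1) * LogP r (- 2 * x / of_nat (2*m+1))))"

definition zetaE :: "nat \<Rightarrow> real" where
  "zetaE s = (\<Sum>n. (-1) ^ n / (real (n + 1)) ^ s)"

definition dbeta :: "nat \<Rightarrow> real" where
  "dbeta s = (\<Sum>n. (-1) ^ n / (real (2 * n + 1)) ^ s)"

definition catalan :: real where
  "catalan = dbeta 2"

end

theory Submission
  imports Defs
begin


lemma prod_split_odd:
  fixes x :: real
  shows "(\<Prod>k=1..2*N. 1 - (2*x)^2/(real k)^2) =
         (\<Prod>m<N. 1 - 4*x^2/(real (2*m+1))^2) * (\<Prod>k=1..N. 1 - x^2/(real k)^2)"
proof (induction N)
  case 0 then show ?case by simp
next
  case (Suc N)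
  have e: "{1..2*Suc N} = insert (2*N+2) (insert (2*N+1) {1..2*N})" by auto
  have s1: "(\<Prod>k=1..2*Suc N. 1 - (2*x)^2/(real k)^2) =
     (1 - (2*x)^2/(real (2*N+2))^2) * ((1 - (2*x)^2/(real (2*N+1))^2) * (\<Prod>k=1..2*N. 1 - (2*x)^2/(real k)^2))"
    unfolding e by (subst prod.insert; simp)+
  have s2: "(1 - (2*x)^2/(real (2*N+2))^2) = 1 - x^2/(real (Suc N))^2"
  proof -
    have "(real (2*N+2))^2 = 4*(real (Suc N))^2" by (simp add: power2_eq_square algebra_simps)
    thus ?thesis by (simp add: power_mult_distrib)
  qed
  have s3: "(1 - (2*x)^2/(real (2*N+1))^2) = (1 - 4*x^2/(real (2*N+1))^2)" by (simp add: power_mult_distrib)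
  have e1: "(\<Prod>m<Suc N. 1 - 4*x^2/(real (2*m+1))^2) = (1 - 4*x^2/(real (2*N+1))^2) * (\<Prod>m<N. 1 - 4*x^2/(real (2*m+1))^2)"
    by simp
  have e2: "(\<Prod>k=1..Suc N. 1 - x^2/(real k)^2) = (1 - x^2/(real (Suc N))^2) * (\<Prod>k=1..N. 1 - x^2/(real k)^2)"
    by (rule prod.nat_ivl_Suc') simp
  show ?case unfolding s1 s2 s3 Suc.IH e1 e2 by (simp only: ac_simps)
qed

lemma cos_prod:
  fixes x :: real
  assumes "0 \<le> x" "x \<le> 1/4"
  shows "(\<lambda>N. \<Prod>m<N. 1 - 4*x^2/(real (2*m+1))^2) \<longlonglongrightarrow> cos (pi*x)"
proof (cases "x = 0")
  case True then show ?thesis by simp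
next
  case False
  hence xp: "0 < x" using assms by simp
  define P where "P z N = (\<Prod>k=1..N. 1 - z^2/(real k)^2)" for z :: real and N
  have Ppos: "P x N > 0" for N
    unfolding P_def
  proof (intro prod_pos)
    fix k assume "k \<in> {1..N}"
    hence "real k \<ge> 1" by simp
    have "x^2 < 1^2" using assms xp by (intro power_strict_mono) auto
    also have "1^2 \<le> (real k)^2" using \<open>real k \<ge> 1\<close> by (intro power_mono) auto
    finally have "x^2 < (real k)^2" .
    thus "1 - x^2/(real k)^2 > 0" using \<open>real k \<ge> 1\<close> by (simp add: field_simps)
  qed
  have Pnz: "P x N \<noteq> 0" for N using Ppos[of N] by simp
  have L1: "(\<lambda>N. P x N) \<longlonglongrightarrow> sin (pi*x)/(pi*x)"
    unfolding P_def using sin_product_formula_real'[of x] xp by simp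
  have L2': "(\<lambda>N. P (2*x) N) \<longlonglongrightarrow> sin (pi*(2*x))/(pi*(2*x))"
    unfolding P_def using sin_product_formula_real'[of "2*x"] xp by simp
  have sm: "strict_mono (\<lambda>N::nat. 2*N)" by (simp add: strict_mono_def)
  have L2: "(\<lambda>N. P (2*x) (2*N)) \<longlonglongrightarrow> sin (pi*(2*x))/(pi*(2*x))"
    using LIMSEQ_subseq_LIMSEQ[OF L2' sm] by (simp add: o_def)
  have sx: "sin (pi*x) \<noteq> 0"
  proof -
    have "0 < pi*x" using xp by simp
    moreover have "pi*x < pi*1" using assms by (intro mult_strict_left_mono) auto
    ultimately show ?thesis using sin_gt_zero[of "pi*x"] by simp
  qed
  have "(\<lambda>N. P (2*x) (2*N) / P x N) \<longlonglongrightarrow> (sin (pi*(2*x))/(pi*(2*x))) / (sin (pi*x)/(pi*x))"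
    by (intro tendsto_divide L1 L2) (use sx xp in simp)
  also have "(sin (pi*(2*x))/(pi*(2*x))) / (sin (pi*x)/(pi*x)) = cos (pi*x)"
  proof -
    have "sin (pi*(2*x)) = 2 * sin (pi*x) * cos (pi*x)" using sin_double[of "pi*x"] by (simp add: mult_ac)
    thus ?thesis using sx xp by (simp add: field_simps)
  qed
  also have "(\<lambda>N. P (2*x) (2*N) / P x N) = (\<lambda>N. \<Prod>m<N. 1 - 4*x^2/(real (2*m+1))^2)"
  proof
    fix N
    have "P (2*x) (2*N) = (\<Prod>m<N. 1 - 4*x^2/(real (2*m+1))^2) * P x N"
      unfolding P_def by (rule prod_split_odd)
    thus "P (2*x) (2*N) / P x N = (\<Prod>m<N. 1 - 4*x^2/(real (2*m+1))^2)" using Pnz[of N] by simp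
  qed
  finally show ?thesis .
qed


lemma factor_pos:
  fixes x :: real
  assumes "0 \<le> x" "x \<le> 1/4"
  shows "1 - 4*x^2/(real (2*m+1))^2 > 0" "1 - 4*x^2/(real (2*m+1))^2 \<le> 1"
proof -
  have "4*x^2 \<le> 4*(1/4)^2" using assms by (intro mult_left_mono power_mono) auto
  also have "\<dots> < 1" by (simp add: power2_eq_square)
  also have "1 \<le> (real (2*m+1))^2" by simp
  finally show "1 - 4*x^2/(real (2*m+1))^2 > 0" by (simp add: field_simps)
  show "1 - 4*x^2/(real (2*m+1))^2 \<le> 1" by simp
qed

lemma lncos_sums:
  fixes x :: real
  assumes "0 \<le> x" "x \<le> 1/4"
  shows "(\<lambda>m. ln (1 - 4*x^2/(real (2*m+1))^2)) sums ln (cos (pi*x))"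
proof -
  have cpos: "cos (pi*x) > 0"
  proof (rule cos_gt_zero_pi)
    have "0 \<le> pi*x" using assms by simp
    thus "- (pi/2) < pi*x" using pi_gt_zero by linarith
    have "pi*x \<le> pi*(1/4)" using assms by (intro mult_left_mono) auto
    thus "pi*x < pi/2" using pi_gt_zero by linarith
  qed
  have "(\<lambda>N. ln (\<Prod>m<N. 1 - 4*x^2/(real (2*m+1))^2)) \<longlonglongrightarrow> ln (cos (pi*x))"
    using tendsto_ln[OF cos_prod[OF assms]] cpos by simp
  also have "(\<lambda>N. ln (\<Prod>m<N. 1 - 4*x^2/(real (2*m+1))^2)) = (\<lambda>N. \<Sum>m<N. ln (1 - 4*x^2/(real (2*m+1))^2))"
  proof -
    have fnz: "\<And>m. 1 - 4*x^2/(real (2*m+1))^2 \<noteq> 0" using factor_pos(1)[OF assms] by (metis less_irrefl)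
    show ?thesis by (intro ext ln_prod finite_lessThan fnz)
  qed
  finally show ?thesis unfolding sums_def .
qed

definition LPr :: "nat \<Rightarrow> real \<Rightarrow> real" where
  "LPr r y = ln (1 - y) + (\<Sum>k=1..r. y ^ k / real k)"

lemma LPr_deriv:
  assumes "y < 1"
  shows "(LPr r has_real_derivative (- (y ^ r / (1 - y)))) (at y)"
proof -
  have "(LPr r has_real_derivative (inverse (1 - y) * (0 - 1) + (\<Sum>k=1..r. real k * y^(k-1) / real k))) (at y)"
    unfolding LPr_def using assms
    by (auto intro!: derivative_eq_intros simp: inverse_eq_divide)
  also have "(\<Sum>k=1..r. real k * y^(k-1) / real k) = (\<Sum>k<r. y^k)"
  proof -
    have "(\<Sum>k=1..r. real k * y^(k-1) / real k) = (\<Sum>k=1..r. y^(k-1))"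
      by (intro sum.cong) auto
    also have "\<dots> = (\<Sum>k<r. y^k)"
      by (rule sum.reindex_bij_witness[of _ Suc "\<lambda>k. k - 1"]) auto
    finally show ?thesis .
  qed
  also have "inverse (1 - y) * (0 - 1) + (\<Sum>k<r. y^k) = - (y ^ r / (1 - y))"
  proof -
    have h: "(1 - y) * (\<Sum>k<r. y^k) = 1 - y^r"
      by (simp add: one_diff_power_eq)
    have d: "1 - y \<noteq> 0" using assms by simp
    have S: "(\<Sum>k<r. y^k) = (1 - y^r)/(1-y)" using h d by (simp add: eq_divide_eq mult.commute)
    have "inverse (1 - y) * (0 - 1) + (1 - y^r)/(1-y) = (-1 + (1 - y^r))/(1-y)"
      by (simp add: inverse_eq_divide add_divide_distrib diff_divide_distrib)
    also have "\<dots> = - (y ^ r / (1 - y))" by simp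
    finally show ?thesis unfolding S .
  qed
  finally show ?thesis .
qed

lemma alg:
  fixes c x :: real
  assumes c: "c > 0" and x1: "c*x < 1" and x2: "-1 < c*x"
  shows "(1/c)^(j+1) * ( -((c*x)^(j+2)/(1-c*x))*c + (-1)^(j+1) * (-((-(c*x))^(j+2)/(1-(-(c*x)))))*(-c) )
       = x^(j+1) * (-(2*c^2*x)/(1 - c^2*x^2))"
proof -
  define A where "A = (c*x)^(j+2)"
  have p1: "(-(c*x))^(j+2) = (-1)^(j+2)*A" unfolding A_def by (simp add: power_mult_distrib[symmetric])
  have p2: "(-1::real)^(j+1)*(-1)^(j+2) = -1"
  proof -
    have "(-1::real)^(j+1)*(-1)^(j+2) = (-1)^(2*j+3)" by (simp add: power_add[symmetric])
    also have "\<dots> = -1" by simp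
    finally show ?thesis .
  qed
  have p3: "(1/c)^(j+1) * A = c * x^(j+2)"
    unfolding A_def using c by (simp add: power_mult_distrib power_divide field_simps)
  have d1: "1 - c*x \<noteq> 0" "1 + c*x \<noteq> 0" using x1 x2 by auto
  have d2: "1 - c^2*x^2 = (1 - c*x)*(1+c*x)" by (simp add: algebra_simps power2_eq_square)
  have "(1/c)^(j+1) * ( -((c*x)^(j+2)/(1-c*x))*c + (-1)^(j+1) * (-((-(c*x))^(j+2)/(1-(-(c*x)))))*(-c) )
      = (1/c)^(j+1) * A * c * ( -(1/(1-c*x)) + ((-1)^(j+1)*(-1)^(j+2)) * (1/(1+c*x)))"
  proof -
    define B where "B = (1/c)^(j+1)"
    define S1 where "S1 = (-1::real)^(j+1)"
    define S2 where "S2 = (-1::real)^(j+2)"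
    have "B * ( -(A/(1-c*x))*c + S1 * (-((S2*A)/(1-(-(c*x)))))*(-c) )
      = B * A * c * ( -(1/(1-c*x)) + (S1*S2) * (1/(1+c*x)))"
      using d1 by (simp add: field_simps)
    thus ?thesis unfolding p1 A_def[symmetric] B_def S1_def S2_def .
  qed
  also have "\<dots> = c^2 * x^(j+2) * (-(1/(1-c*x)) - 1/(1+c*x))"
    unfolding p2 p3 by (simp add: power2_eq_square)
  also have "\<dots> = x^(j+1) * (-(2*c^2*x)/(1 - c^2*x^2))"
    unfolding d2 using d1 by (simp add: field_simps power2_eq_square)
  finally show ?thesis .
qed

definition GG :: "nat \<Rightarrow> real \<Rightarrow> real \<Rightarrow> real" where
  "GG j c x = (1/c)^(j+1) * (LPr (j+2) (c*x) + (-1)^(j+1) * LPr (j+2) (-(c*x)))"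

definition gg :: "real \<Rightarrow> real \<Rightarrow> real" where
  "gg c x = ln (1 - c^2*x^2)"

lemma GG_deriv:
  assumes c: "c > 0" and x1: "c*x < 1" and x2: "-1 < c*x"
  shows "(GG j c has_real_derivative x^(j+1) * (-(2*c^2*x)/(1 - c^2*x^2))) (at x)"
proof -
  have d1: "((\<lambda>x. LPr (j+2) (c*x)) has_real_derivative (-((c*x)^(j+2)/(1-c*x)))*c) (at x)"
    by (rule DERIV_chain2[where g="\<lambda>x. c*x" and f="LPr (j+2)", OF LPr_deriv[OF x1]]) (auto intro!: derivative_eq_intros)
  have d2: "((\<lambda>x. LPr (j+2) (-(c*x))) has_real_derivative (-((-(c*x))^(j+2)/(1-(-(c*x)))))*(-c)) (at x)"
    by (rule DERIV_chain2[where g="\<lambda>x. -(c*x)" and f="LPr (j+2)", OF LPr_deriv]) (use x2 in \<open>auto intro!: derivative_eq_intros\<close>)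
  have "(GG j c has_real_derivative (1/c)^(j+1) * ( (-((c*x)^(j+2)/(1-c*x)))*c + (-1)^(j+1) * ((-((-(c*x))^(j+2)/(1-(-(c*x)))))*(-c)) )) (at x)"
    unfolding GG_def[abs_def] by (intro DERIV_cmult DERIV_add d1 d2)
  hence "(GG j c has_real_derivative (1/c)^(j+1) * ( -((c*x)^(j+2)/(1-c*x))*c + (-1)^(j+1) * (-((-(c*x))^(j+2)/(1-(-(c*x)))))*(-c) )) (at x)"
    by (simp only: mult.assoc)
  thus ?thesis unfolding alg[OF c x1 x2] .
qed

lemma gg_deriv:
  assumes x1: "c*x < 1" and x2: "-1 < c*x"
  shows "(gg c has_real_derivative (-(2*c^2*x)/(1 - c^2*x^2))) (at x)"
proof -
  have "c^2*x^2 < 1"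
  proof -
    have "\<bar>c*x\<bar> < 1" using x1 x2 by auto
    hence "\<bar>c*x\<bar>^2 < 1^2" by (intro power_strict_mono) auto
    thus ?thesis by (simp add: power_mult_distrib)
  qed
  hence nz: "1 - c^2*x^2 \<noteq> 0" "1 - c^2*x^2 > 0" by auto
  show ?thesis
    unfolding gg_def[abs_def] using nz by (auto intro!: derivative_eq_intros simp: field_simps)
qed

lemma GG_integral:
  assumes c: "c > 0" and b: "0 \<le> b" "c*b < 1"
  shows "((\<lambda>x. x^j * gg c x) has_integral ((b^(j+1)*gg c b - GG j c b)/(j+1))) {0..b}"
proof -
  define H where "H x = GG j c x - x^(j+1)*gg c x" for x
  have "((\<lambda>x. -(real (j+1)) * (x^j * gg c x)) has_integral (H b - H 0)) {0..b}"
  proof (rule fundamental_theorem_of_calculus[OF b(1)])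
    fix x assume x: "x \<in> {0..b}"
    have "c*x \<le> c*b" using x c by (intro mult_left_mono) auto
    hence x1: "c*x < 1" using b by linarith
    have "0 \<le> c*x" using x c by simp
    hence x2: "-1 < c*x" by linarith
    have dp: "((\<lambda>x. x^(j+1)) has_real_derivative (real (j+1) * x^j)) (at x)"
      using DERIV_pow[of "j+1" x] by simp
    have "(H has_real_derivative (x^(j+1) * (-(2*c^2*x)/(1 - c^2*x^2)) -
           ((real (j+1) * x^j) * gg c x + (-(2*c^2*x)/(1 - c^2*x^2)) * x^(j+1)))) (at x)"
      unfolding H_def[abs_def]
      by (intro DERIV_diff DERIV_mult GG_deriv[OF c x1 x2] gg_deriv[OF x1 x2] dp)
    hence "(H has_real_derivative (-(real (j+1)) * (x^j * gg c x))) (at x)"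
      by (simp add: algebra_simps)
    thus "(H has_vector_derivative (-(real (j+1)) * (x^j * gg c x))) (at x within {0..b})"
      by (simp add: has_real_derivative_iff_has_vector_derivative has_vector_derivative_at_within)
  qed
  moreover have "H 0 = 0"
  proof -
    have "(\<Sum>k=1..j+2. (0::real)^k/real k) = 0" by (intro sum.neutral) auto
    thus ?thesis unfolding H_def GG_def gg_def LPr_def by simp
  qed
  ultimately have "((\<lambda>x. -(real (j+1)) * (x^j * gg c x)) has_integral H b) {0..b}" by simp
  hence "((\<lambda>x. (-1/real (j+1)) * (-(real (j+1)) * (x^j * gg c x))) has_integral (-1/real (j+1)) * H b) {0..b}"
    by (rule has_integral_mult_right)
  moreover have "(\<lambda>x. (-1/real (j+1)) * (-(real (j+1)) * (x^j * gg c x))) = (\<lambda>x. x^j * gg c x)"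
  proof (rule ext)
    fix x
    have "real (j+1) \<noteq> 0" by simp
    thus "(-1/real (j+1)) * (-(real (j+1)) * (x^j * gg c x)) = x^j * gg c x"
      by (simp only: mult.assoc[symmetric] mult_minus_left mult_minus_right minus_minus) simp
  qed
  moreover have "(-1/real (j+1)) * H b = (b^(j+1)*gg c b - GG j c b)/(j+1)"
    unfolding H_def by (simp add: field_simps)
  ultimately show ?thesis by simp
qed


definition cc :: "nat \<Rightarrow> real" where "cc m = 2 / real (2*m+1)"

lemma cc_pos: "cc m > 0" unfolding cc_def by simp
lemma cc_le: "cc m \<le> 2" unfolding cc_def by (simp add: field_simps)

lemma gg_cc: "gg (cc m) x = ln (1 - 4*x^2/(real (2*m+1))^2)"
  unfolding gg_def cc_def by (simp add: power_divide)

lemma cc_quarter: "cc m * (1/4) < 1"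
  using cc_le[of m] by simp

lemma GG_term:
  "GG j (cc m) (1/4) = (1/4)^(j+1) * gg (cc m) (1/4) - real (j+1) * integral {0..1/4} (\<lambda>x. x^j * gg (cc m) x)"
proof -
  define A where "A = (1/4::real)^(j+1) * gg (cc m) (1/4)"
  define G where "G = GG j (cc m) (1/4)"
  define I where "I = integral {0..1/4} (\<lambda>x. x^j * gg (cc m) x)"
  have "I = (A - G)/(j+1)"
    unfolding I_def A_def G_def
    using GG_integral[where c="cc m" and b="1/4" and j=j, OF cc_pos _ cc_quarter] by (simp add: integral_unique)
  hence "real (j+1) * I = A - G" by simp
  hence "G = A - real (j+1) * I" by linarith
  thus ?thesis unfolding A_def G_def I_def .
qed

lemma GG_integrable: "(\<lambda>x. x^j * gg (cc m) x) integrable_on {0..1/4}"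
  using GG_integral[where c="cc m" and b="1/4" and j=j, OF cc_pos _ cc_quarter] by (auto simp: integrable_on_def)

lemma int_lncos_sums:
  "(\<lambda>m. integral {0..1/4} (\<lambda>x. x^j * gg (cc m) x)) sums integral {0..1/4} (\<lambda>x. x^j * ln (cos (pi*x)))"
proof -
  define f where "f N x = (\<Sum>m<N. x^j * gg (cc m) x)" for N x
  have cpos: "cos (pi*x) > 0" if "x \<in> {0..1/4}" for x
  proof (rule cos_gt_zero_pi)
    have "0 \<le> pi*x" using that by simp
    thus "- (pi/2) < pi*x" using pi_gt_zero by linarith
    have "pi*x \<le> pi*(1/4)" using that by (intro mult_left_mono) auto
    thus "pi*x < pi/2" using pi_gt_zero by linarith
  qed
  have fi: "f N integrable_on {0..1/4}" for N
    unfolding f_def by (intro integrable_sum GG_integrable finite_lessThan)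
  have hi: "(\<lambda>x. - ln (cos (pi*x))) integrable_on {0..1/4}"
    by (intro integrable_continuous_interval continuous_intros) (use cpos in force)
  have le: "norm (f N x) \<le> - ln (cos (pi*x))" if x: "x \<in> {0..1/4}" for N x
  proof -
    have x0: "0 \<le> x" "x \<le> 1/4" using x by auto
    have S: "(\<lambda>m. - gg (cc m) x) sums (- ln (cos (pi*x)))"
      using sums_minus[OF lncos_sums[OF x0]] by (simp add: gg_cc)
    have nn: "0 \<le> - gg (cc m) x" for m
      using factor_pos[OF x0, of m] by (simp add: gg_cc)
    have "(\<Sum>m<N. - gg (cc m) x) \<le> - ln (cos (pi*x))"
      using sum_le_suminf[OF sums_summable[OF S], of "{..<N}"] nn sums_unique[OF S] by simp
    moreover have "0 \<le> (\<Sum>m<N. - gg (cc m) x)" using nn by (intro sum_nonneg) auto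
    moreover have "\<bar>x^j\<bar> \<le> 1" using x0 by (simp add: power_le_one)
    ultimately have "\<bar>x^j\<bar> * \<bar>\<Sum>m<N. gg (cc m) x\<bar> \<le> 1 * (- ln (cos (pi*x)))"
      by (intro mult_mono) (auto simp: sum_negf)
    thus ?thesis unfolding f_def by (simp add: sum_distrib_left[symmetric] abs_mult)
  qed
  have conv: "(\<lambda>N. f N x) \<longlonglongrightarrow> x^j * ln (cos (pi*x))" if x: "x \<in> {0..1/4}" for x
  proof -
    have x0: "0 \<le> x" "x \<le> 1/4" using x by auto
    have "(\<lambda>m. x^j * gg (cc m) x) sums (x^j * ln (cos (pi*x)))"
      using sums_mult[OF lncos_sums[OF x0], of "x^j"] by (simp add: gg_cc)
    thus ?thesis unfolding f_def sums_def .
  qed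
  have "(\<lambda>N. integral {0..1/4} (f N)) \<longlonglongrightarrow> integral {0..1/4} (\<lambda>x. x^j * ln (cos (pi*x)))"
    by (rule dominated_convergence(2)[OF fi hi le conv])
  moreover have "integral {0..1/4} (f N) = (\<Sum>m<N. integral {0..1/4} (\<lambda>x. x^j * gg (cc m) x))" for N
    unfolding f_def by (intro integral_sum GG_integrable finite_lessThan)
  ultimately show ?thesis unfolding sums_def by simp
qed


lemma LogP_real:
  assumes "-1 < y" "y < 1"
  shows "LogP r (complex_of_real y) = complex_of_real (LPr r y)"
proof -
  have "Ln (1 - complex_of_real y) = complex_of_real (ln (1 - y))"
    using Ln_of_real[of "1 - y"] assms by simp
  thus ?thesis unfolding LogP_def LPr_def by simp
qed

lemma logC_term:
  "(of_nat (2*m+1) / 2) ^ (Suc (Suc j) - 1) *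
      (LogP (Suc (Suc j)) (2 * (1/4) / of_nat (2*m+1)) +
       (-1) ^ (Suc (Suc j) - 1) * LogP (Suc (Suc j)) (- 2 * (1/4) / of_nat (2*m+1)))
   = complex_of_real (GG j (cc m) (1/4))"
proof -
  have y: "-1 < cc m * (1/4)" "cc m * (1/4) < 1" "-1 < -(cc m * (1/4))" "-(cc m * (1/4)) < 1"
    using cc_pos[of m] cc_le[of m] by auto
  have c4: "cc m * (1/4) = 2 * (1/4) / real (2*m+1)" unfolding cc_def by (simp add: field_simps)
  have e1: "(2 * (1/4) / of_nat (2*m+1) :: complex) = complex_of_real (cc m * (1/4))"
    unfolding c4 by simp
  have e2: "(- 2 * (1/4) / of_nat (2*m+1) :: complex) = complex_of_real (-(cc m * (1/4)))"
    unfolding c4 by simp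
  have e3: "(of_nat (2*m+1) / 2 :: complex) = complex_of_real (1 / cc m)"
    unfolding cc_def by simp
  show ?thesis
    unfolding e1 e2 e3 LogP_real[OF y(1,2)] LogP_real[OF y(3,4)] GG_def by simp
qed

lemma logC_real:
  "logC (Suc (Suc j)) (1/4) = complex_of_real ((1/4)^(j+1) * ln (cos (pi/4))
      - real (j+1) * integral {0..1/4} (\<lambda>x. x^j * ln (cos (pi*x))))"
proof -
  have a: "(\<lambda>m. gg (cc m) (1/4)) sums ln (cos (pi/4))"
    using lncos_sums[of "1/4"] by (simp add: gg_cc)
  have "(\<lambda>m. (1/4)^(j+1) * gg (cc m) (1/4) - real (j+1) * integral {0..1/4} (\<lambda>x. x^j * gg (cc m) x))
     sums ((1/4)^(j+1) * ln (cos (pi/4)) - real (j+1) * integral {0..1/4} (\<lambda>x. x^j * ln (cos (pi*x))))"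
    by (intro sums_diff sums_mult a int_lncos_sums)
  hence "(\<lambda>m. GG j (cc m) (1/4)) sums ((1/4)^(j+1) * ln (cos (pi/4)) - real (j+1) * integral {0..1/4} (\<lambda>x. x^j * ln (cos (pi*x))))"
    by (simp only: GG_term)
  from sums_of_real[OF this, where 'a=complex]
  have "(\<lambda>m. (of_nat (2*m+1) / 2) ^ (Suc (Suc j) - 1) *
      (LogP (Suc (Suc j)) (2 * (1/4) / of_nat (2*m+1)) +
       (-1) ^ (Suc (Suc j) - 1) * LogP (Suc (Suc j)) (- 2 * (1/4) / of_nat (2*m+1)))) sums
      complex_of_real ((1/4)^(j+1) * ln (cos (pi/4)) - real (j+1) * integral {0..1/4} (\<lambda>x. x^j * ln (cos (pi*x))))"
    by (simp only: logC_term)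
  thus ?thesis unfolding logC_def by (rule sums_unique[symmetric])
qed



lemma phi_deriv:
  fixes u z :: complex
  assumes "Re (1 + z*u) > 0"
  shows "((\<lambda>z. Ln (1 + z*u) - (\<Sum>k<N. (-1)^k * (z*u)^(k+1) / of_nat (k+1)))
          has_field_derivative (u * (-(z*u))^N / (1 + z*u))) (at z)"
proof -
  have nz: "1 + z*u \<notin> \<real>\<^sub>\<le>\<^sub>0" using assms by (auto simp: complex_nonpos_Reals_iff)
  have nzg: "w \<noteq> 0" if "Re w > 0" for w :: complex using that by auto
  have nz0: "1 + z*u \<noteq> 0" by (rule nzg[OF assms])
  have d1: "((\<lambda>z. Ln (1 + z*u)) has_field_derivative (inverse (1 + z*u) * u)) (at z)"
  proof -
    have gd: "((\<lambda>z. 1 + z*u) has_field_derivative u) (at z)"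
      by (rule DERIV_cong[OF DERIV_add[OF DERIV_const[of 1] DERIV_cmult_right[OF DERIV_ident]]]) simp
    show ?thesis using DERIV_chain2[where g="\<lambda>z. 1 + z*u" and f=Ln, OF has_field_derivative_Ln[OF nz] gd] .
  qed
  have d2: "((\<lambda>z. (-1)^k * (z*u)^(k+1) / of_nat (k+1)) has_field_derivative (u * (-(z*u))^k)) (at z)" for k
  proof -
    have D: "((\<lambda>z. (-1)^k * (z*u)^(k+1) / of_nat (k+1)) has_field_derivative
          ((-1)^k * (of_nat (k+1) * (z*u)^k * u) / of_nat (k+1))) (at z)"
      by (auto intro!: derivative_eq_intros simp del: of_nat_Suc power_Suc)
    have E: "(-1)^k * (of_nat (k+1) * (z*u)^k * u) / of_nat (k+1) = u * (-(z*u))^k"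
    proof -
      have n: "(of_nat (k+1) :: complex) \<noteq> 0" by (simp only: of_nat_eq_0_iff)
      have "(-1)^k * (of_nat (k+1) * (z*u)^k * u) / of_nat (k+1) = of_nat (k+1) * ((-1)^k * (z*u)^k * u) / of_nat (k+1)"
        by (simp only: mult_ac)
      also have "\<dots> = (-1)^k * (z*u)^k * u" using n by (rule nonzero_mult_div_cancel_left)
      also have "(-1)^k * (z*u)^k = (-(z*u))^k" by (rule power_minus[symmetric])
      finally show ?thesis by (simp only: mult_ac)
    qed
    show ?thesis by (rule DERIV_cong[OF D E])
  qed
  have D: "((\<lambda>z. Ln (1 + z*u) - (\<Sum>k<N. (-1)^k * (z*u)^(k+1) / of_nat (k+1)))
          has_field_derivative (inverse (1 + z*u) * u - (\<Sum>k<N. u * (-(z*u))^k))) (at z)"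
    by (intro DERIV_diff d1 DERIV_sum d2)
  have E: "inverse (1 + z*u) * u - (\<Sum>k<N. u * (-(z*u))^k) = u * (-(z*u))^N / (1 + z*u)"
  proof -
    have g: "(1 - (-(z*u))) * (\<Sum>k<N. (-(z*u))^k) = 1 - (-(z*u))^N"
      by (rule one_diff_power_eq[symmetric])
    hence g': "(1 + z*u) * (\<Sum>k<N. (-(z*u))^k) = 1 - (-(z*u))^N" by (simp only: diff_minus_eq_add)
    have S: "(\<Sum>k<N. (-(z*u))^k) = (1 - (-(z*u))^N) / (1 + z*u)"
      using nz0 g' by (metis nonzero_mult_div_cancel_left)
    define a where "a = (-(z*u))^N"
    define b where "b = 1 + z*u"
    have "inverse (1 + z*u) * u - (\<Sum>k<N. u * (-(z*u))^k) = inverse b * u - u * ((1 - a) / b)"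
      unfolding sum_distrib_left[symmetric] S a_def b_def ..
    also have "\<dots> = u * a / b" using nz0 unfolding b_def[symmetric] by (simp add: field_simps)
    finally show ?thesis unfolding a_def b_def .
  qed
  show ?thesis by (rule DERIV_cong[OF D E])
qed

lemma ln_series_bound:
  fixes u :: complex
  assumes u1: "norm u \<le> 1" and u2: "Re u \<ge> 0"
  shows "norm (Ln (1 + u) - (\<Sum>k<N. (-1)^k * u^(k+1) / of_nat (k+1))) \<le> 1 / real (N+1)"
proof -
  define \<phi> where "\<phi> z = Ln (1 + z*u) - (\<Sum>k<N. (-1)^k * (z*u)^(k+1) / of_nat (k+1))" for z
  define h where "h s = \<phi> (complex_of_real s)" for s
  define h' where "h' s = u * (-(complex_of_real s*u))^N / (1 + complex_of_real s*u)" for s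
  have Re_pos: "Re (1 + complex_of_real s * u) \<ge> 1" if "s \<in> {0..1}" for s
    using that u2 by simp
  have hd: "(h has_vector_derivative h' s) (at s within {0..1})" if "s \<in> {0..1}" for s
    unfolding h_def h'_def
    by (rule has_vector_derivative_real_field, unfold \<phi>_def, rule phi_deriv) (use Re_pos[OF that] in simp)
  have I: "(h' has_integral (h 1 - h 0)) {0..1}"
    by (rule fundamental_theorem_of_calculus) (use hd in auto)
  have G: "((\<lambda>s. s^N) has_integral (1 / real (N+1))) {0..1::real}"
  proof -
    have "((\<lambda>s. s^N) has_integral (1^(N+1)/real (N+1) - 0^(N+1)/real (N+1))) {0..1::real}"
      by (rule fundamental_theorem_of_calculus)
         (auto intro!: derivative_eq_intros simp: has_real_derivative_iff_has_vector_derivative[symmetric] simp del: power_Suc)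
    thus ?thesis by simp
  qed
  have bnd: "norm (h' s) \<le> s^N" if "s \<in> {0..1}" for s
  proof -
    have s: "0 \<le> s" "s \<le> 1" using that by auto
    have "norm (1 + complex_of_real s * u) \<ge> 1"
      using Re_pos[OF that] complex_Re_le_cmod[of "1 + complex_of_real s * u"] by linarith
    moreover have "norm (u * (-(complex_of_real s*u))^N) \<le> s^N"
    proof -
      have "norm (u * (-(complex_of_real s*u))^N) = norm u * (s * norm u)^N"
        using s by (simp add: norm_mult norm_power)
      also have "\<dots> \<le> 1 * (s * 1)^N"
        using s u1 by (intro mult_mono power_mono mult_left_mono) auto
      finally show ?thesis by simp
    qed
    ultimately show ?thesis unfolding h'_def norm_divide
    proof -
      assume b: "1 \<le> norm (1 + complex_of_real s * u)" and a: "norm (u * (-(complex_of_real s*u))^N) \<le> s^N"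
      have "norm (u * (-(complex_of_real s*u))^N) / norm (1 + complex_of_real s * u)
            \<le> norm (u * (-(complex_of_real s*u))^N) / 1"
      proof (rule divide_left_mono)
        show "0 < norm (1 + complex_of_real s * u) * 1" using b by linarith
      qed (use b in auto)
      with a show "norm (u * (-(complex_of_real s*u))^N) / norm (1 + complex_of_real s * u) \<le> s^N" by simp
    qed
  qed
  have "norm (h 1 - h 0) \<le> 1 / real (N+1)"
    using integral_norm_bound_integral[OF has_integral_integrable[OF I] has_integral_integrable[OF G] bnd]
      integral_unique[OF I] integral_unique[OF G] by simp
  moreover have "h 0 = 0" unfolding h_def \<phi>_def by simp
  moreover have "h 1 = Ln (1 + u) - (\<Sum>k<N. (-1)^k * u^(k+1) / of_nat (k+1))"
    unfolding h_def \<phi>_def by simp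
  ultimately show ?thesis by simp
qed



lemma one_plus_cis: "1 + cis t = complex_of_real (2 * cos (t/2)) * cis (t/2)"
proof -
  have t: "t = 2 * (t/2)" by simp
  have "cos t = 2 * cos (t/2)^2 - 1" by (subst t, rule cos_double_cos)
  moreover have "sin t = 2 * sin (t/2) * cos (t/2)" by (subst t, rule sin_double)
  ultimately show ?thesis by (intro complex_eqI) (simp_all add: power2_eq_square)
qed

lemma cos_pos_quarter:
  fixes x :: real
  assumes "0 \<le> x" "x \<le> 1/4"
  shows "cos (pi*x) > 0"
proof (rule cos_gt_zero_pi)
  have "0 \<le> pi*x" using assms by simp
  thus "- (pi/2) < pi*x" using pi_gt_zero by linarith
  have "pi*x \<le> pi*(1/4)" using assms by (intro mult_left_mono) auto
  thus "pi*x < pi/2" using pi_gt_zero by linarith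
qed

lemma Re_Ln_one_plus_cis:
  fixes x :: real
  assumes "0 \<le> x" "x \<le> 1/4"
  shows "Re (Ln (1 + cis (2*pi*x))) = ln (2 * cos (pi*x))"
proof -
  have c: "cos (pi*x) > 0" by (rule cos_pos_quarter[OF assms])
  have e: "1 + cis (2*pi*x) = complex_of_real (2 * cos (pi*x)) * cis (pi*x)"
    using one_plus_cis[of "2*pi*x"] by simp
  have "norm (1 + cis (2*pi*x)) = 2 * cos (pi*x)"
    unfolding e norm_mult using c by simp
  moreover have "1 + cis (2*pi*x) \<noteq> 0" unfolding e using c by simp
  ultimately show ?thesis by simp
qed

lemma Re_partial:
  "Re (\<Sum>k<N. (-1)^k * (cis t)^(k+1) / of_nat (k+1)) = (\<Sum>k<N. (-1)^k * cos (real (k+1) * t) / real (k+1))"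
proof -
  have e: "(-1)^k * (cis t)^(k+1) / of_nat (k+1) = complex_of_real ((-1)^k / real (k+1)) * cis (real (k+1) * t)" for k
    unfolding Complex.DeMoivre by simp
  have "Re ((-1)^k * (cis t)^(k+1) / of_nat (k+1)) = (-1)^k * cos (real (k+1) * t) / real (k+1)" for k
    unfolding e by simp
  thus ?thesis by (simp add: Re_sum)
qed

lemma cis_quarter:
  fixes x :: real
  assumes "0 \<le> x" "x \<le> 1/4"
  shows "norm (cis (2*pi*x)) \<le> 1" "Re (cis (2*pi*x)) \<ge> 0"
proof -
  show "norm (cis (2*pi*x)) \<le> 1" by simp
  have "cos (2*pi*x) \<ge> 0"
  proof (rule cos_ge_zero)
    have "0 \<le> 2*pi*x" using assms by simp
    thus "- (pi/2) \<le> 2*pi*x" using pi_gt_zero by linarith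
    have "2*pi*x \<le> 2*pi*(1/4)" using assms by (intro mult_left_mono) auto
    thus "2*pi*x \<le> pi/2" by simp
  qed
  thus "Re (cis (2*pi*x)) \<ge> 0" by simp
qed

lemma fourier_pointwise:
  fixes x :: real
  assumes "0 \<le> x" "x \<le> 1/4"
  shows "(\<lambda>N. \<Sum>k<N. (-1)^k * cos (real (k+1) * (2*pi*x)) / real (k+1)) \<longlonglongrightarrow> ln (2 * cos (pi*x))"
    and "\<bar>\<Sum>k<N. (-1)^k * cos (real (k+1) * (2*pi*x)) / real (k+1)\<bar> \<le> 2"
proof -
  define u where "u = cis (2*pi*x)"
  define S where "S N = (\<Sum>k<N. (-1)^k * u^(k+1) / of_nat (k+1))" for N
  have b: "norm (Ln (1 + u) - S N) \<le> 1 / real (N+1)" for N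
    unfolding S_def u_def using ln_series_bound cis_quarter[OF assms] by blast
  have "(\<lambda>N. S N - Ln (1 + u)) \<longlonglongrightarrow> 0"
  proof (rule Lim_null_comparison)
    show "\<forall>\<^sub>F N in sequentially. norm (S N - Ln (1 + u)) \<le> inverse (real (Suc N))"
      using b by (intro always_eventually allI) (simp add: norm_minus_commute inverse_eq_divide)
  qed (rule LIMSEQ_inverse_real_of_nat)
  hence "S \<longlonglongrightarrow> Ln (1 + u)" by (simp add: Lim_null[symmetric])
  hence "(\<lambda>N. Re (S N)) \<longlonglongrightarrow> Re (Ln (1 + u))" by (rule tendsto_Re)
  thus "(\<lambda>N. \<Sum>k<N. (-1)^k * cos (real (k+1) * (2*pi*x)) / real (k+1)) \<longlonglongrightarrow> ln (2 * cos (pi*x))"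
    unfolding S_def u_def Re_partial Re_Ln_one_plus_cis[OF assms] .
  have "\<bar>Re (S N) - Re (Ln (1 + u))\<bar> \<le> 1"
  proof -
    have "\<bar>Re (S N - Ln (1 + u))\<bar> \<le> norm (S N - Ln (1 + u))" by (rule abs_Re_le_cmod)
    also have "\<dots> \<le> 1 / real (N+1)" using b[of N] by (simp add: norm_minus_commute)
    also have "\<dots> \<le> 1" by simp
    finally show ?thesis by simp
  qed
  moreover have "0 \<le> Re (Ln (1 + u))" "Re (Ln (1 + u)) \<le> 1"
  proof -
    have c: "cos (pi*x) > 0" by (rule cos_pos_quarter[OF assms])
    have c1: "cos (pi*x) \<le> 1" by simp
    have c2: "1/2 \<le> cos (pi*x)"
    proof -
      have "pi*x \<le> pi/3" using assms pi_gt_zero by (simp add: mult_left_mono)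
      hence "cos (pi/3) \<le> cos (pi*x)" using assms by (intro cos_monotone_0_pi_le) auto
      thus ?thesis by (simp add: cos_60)
    qed
    have "Re (Ln (1 + u)) = ln (2 * cos (pi*x))" unfolding u_def by (rule Re_Ln_one_plus_cis[OF assms])
    moreover have "0 \<le> ln (2 * cos (pi*x))" using c2 by simp
    moreover have "ln (2 * cos (pi*x)) \<le> ln 2" using c c1 by simp
    moreover have "ln (2::real) \<le> 1" using ln_2_less_1 by simp
    ultimately show "0 \<le> Re (Ln (1 + u))" "Re (Ln (1 + u)) \<le> 1" by linarith+
  qed
  ultimately have "\<bar>Re (S N)\<bar> \<le> 2" by linarith
  thus "\<bar>\<Sum>k<N. (-1)^k * cos (real (k+1) * (2*pi*x)) / real (k+1)\<bar> \<le> 2"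
    unfolding S_def u_def Re_partial .
qed



lemma ftc_real:
  fixes F f :: "real \<Rightarrow> real"
  assumes "a \<le> b" "\<And>x. (F has_real_derivative f x) (at x)"
  shows "(f has_integral (F b - F a)) {a..b}"
  by (rule fundamental_theorem_of_calculus[OF assms(1)])
     (use assms(2) in \<open>auto simp: has_real_derivative_iff_has_vector_derivative[symmetric] intro: DERIV_subset\<close>)

lemma cos_int0:
  fixes w :: real assumes w: "w \<noteq> 0"
  shows "((\<lambda>x. x^0 * cos (w*x)) has_integral (sin (w*(1/4))/w)) {0..1/4}"
proof -
  have "((\<lambda>x. x^0 * cos (w*x)) has_integral ((\<lambda>x. sin (w*x)/w) (1/4) - (\<lambda>x. sin (w*x)/w) 0)) {0..1/4}"
  proof (rule ftc_real)
    fix x show "((\<lambda>x. sin (w*x)/w) has_real_derivative x^0 * cos (w*x)) (at x)"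
      using w by (auto intro!: derivative_eq_intros)
  qed simp
  thus ?thesis by simp
qed

lemma cos_int1:
  fixes w :: real assumes w: "w \<noteq> 0"
  shows "((\<lambda>x. x^1 * cos (w*x)) has_integral ((1/4)* sin (w*(1/4))/w + (cos (w*(1/4)) - 1)/w^2)) {0..1/4}"
proof -
  define F where "F x = x* sin (w*x)/w + cos (w*x)/w^2" for x
  have "((\<lambda>x. x^1 * cos (w*x)) has_integral (F (1/4) - F 0)) {0..1/4}"
  proof (rule ftc_real)
    fix x show "(F has_real_derivative x^1 * cos (w*x)) (at x)"
      unfolding F_def[abs_def] using w by (auto intro!: derivative_eq_intros simp: field_simps power2_eq_square)
  qed simp
  thus ?thesis unfolding F_def by (simp add: diff_divide_distrib add_diff_eq diff_diff_eq2)
qed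

lemma cos_int2:
  fixes w :: real assumes w: "w \<noteq> 0"
  shows "((\<lambda>x. x^2 * cos (w*x)) has_integral
     ((1/4)^2* sin (w*(1/4))/w + 2*(1/4)* cos (w*(1/4))/w^2 - 2* sin (w*(1/4))/w^3)) {0..1/4}"
proof -
  define F where "F x = x^2* sin (w*x)/w + 2*x* cos (w*x)/w^2 - 2* sin (w*x)/w^3" for x
  have "((\<lambda>x. x^2 * cos (w*x)) has_integral (F (1/4) - F 0)) {0..1/4}"
  proof (rule ftc_real)
    fix x show "(F has_real_derivative x^2 * cos (w*x)) (at x)"
      unfolding F_def[abs_def] using w
      by (auto intro!: derivative_eq_intros simp: field_simps power2_eq_square power3_eq_cube)
  qed simp
  thus ?thesis unfolding F_def by simp
qed

lemma cos_int3:
  fixes w :: real assumes w: "w \<noteq> 0"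
  shows "((\<lambda>x. x^3 * cos (w*x)) has_integral
     ((1/4)^3* sin (w*(1/4))/w + 3*(1/4)^2* cos (w*(1/4))/w^2 - 6*(1/4)* sin (w*(1/4))/w^3
       - 6*(cos (w*(1/4)) - 1)/w^4)) {0..1/4}"
proof -
  define F where "F x = x^3* sin (w*x)/w + 3*x^2* cos (w*x)/w^2 - 6*x* sin (w*x)/w^3 - 6* cos (w*x)/w^4" for x
  have "((\<lambda>x. x^3 * cos (w*x)) has_integral (F (1/4) - F 0)) {0..1/4}"
  proof (rule ftc_real)
    fix x show "(F has_real_derivative x^3 * cos (w*x)) (at x)"
      unfolding F_def[abs_def] using w
      by (auto intro!: derivative_eq_intros simp: field_simps power2_eq_square power3_eq_cube power4_eq_xxxx)
  qed simp
  moreover have "F (1/4) - F 0 = (1/4)^3 * sin (w*(1/4))/w + 3*(1/4)^2 * cos (w*(1/4))/w^2 - 6*(1/4) * sin (w*(1/4))/w^3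
       - 6*(cos (w*(1/4)) - 1)/w^4"
    unfolding F_def using w by (simp add: field_simps)
  ultimately show ?thesis by simp
qed



lemma fourier_integral:
  fixes cj :: "nat \<Rightarrow> real"
  assumes I: "\<And>k. ((\<lambda>x. x^j * cos (real (k+1) * (2*pi*x))) has_integral cj k) {0..1/4}"
    and S: "(\<lambda>k. (-1)^k / real (k+1) * cj k) sums E"
  shows "integral {0..1/4} (\<lambda>x. x^j * ln (2 * cos (pi*x))) = E"
proof -
  define f where "f N x = (\<Sum>k<N. (-1)^k / real (k+1) * (x^j * cos (real (k+1) * (2*pi*x))))" for N x
  have fI: "(f N has_integral (\<Sum>k<N. (-1)^k / real (k+1) * cj k)) {0..1/4}" for N
    unfolding f_def by (intro has_integral_sum finite_lessThan has_integral_mult_right I)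
  have fx: "f N x = x^j * (\<Sum>k<N. (-1)^k * cos (real (k+1) * (2*pi*x)) / real (k+1))" for N x
    unfolding f_def sum_distrib_left by (intro sum.cong refl) (simp add: field_simps)
  have le: "norm (f N x) \<le> 2" if x: "x \<in> {0..1/4}" for N x
  proof -
    have x0: "0 \<le> x" "x \<le> 1/4" using x by auto
    have "\<bar>x^j\<bar> \<le> 1" using x0 by (simp add: power_le_one)
    hence "\<bar>x^j\<bar> * \<bar>\<Sum>k<N. (-1)^k * cos (real (k+1) * (2*pi*x)) / real (k+1)\<bar> \<le> 1 * 2"
      using fourier_pointwise(2)[OF x0, of N] by (intro mult_mono) auto
    thus ?thesis unfolding fx by (simp add: abs_mult)
  qed
  have conv: "(\<lambda>N. f N x) \<longlonglongrightarrow> x^j * ln (2 * cos (pi*x))" if x: "x \<in> {0..1/4}" for x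
  proof -
    have x0: "0 \<le> x" "x \<le> 1/4" using x by auto
    show ?thesis unfolding fx by (intro tendsto_mult_left fourier_pointwise(1)[OF x0])
  qed
  have hi: "(\<lambda>x. 2::real) integrable_on {0..1/4::real}"
    by (intro integrable_continuous_interval continuous_on_const)
  have fi: "f N integrable_on {0..1/4}" for N using fI by (auto simp: integrable_on_def)
  have "(\<lambda>N. integral {0..1/4} (f N)) \<longlonglongrightarrow> integral {0..1/4} (\<lambda>x. x^j * ln (2 * cos (pi*x)))"
    by (rule dominated_convergence(2)[OF fi hi le conv])
  moreover have "(\<lambda>N. integral {0..1/4} (f N)) \<longlonglongrightarrow> E"
    using S unfolding sums_def integral_unique[OF fI] .
  ultimately show ?thesis by (rule LIMSEQ_unique)
qed

lemma sin_odd_half: "sin (real (2*m+1) * pi / 2) = (-1)^m"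
proof -
  have e: "real (2*m+1) * pi / 2 = real m * pi + pi/2" by (simp add: field_simps)
  show ?thesis unfolding e sin_add by simp
qed

lemma cos_odd_half: "cos (real (2*m+1) * pi / 2) = 0"
proof -
  have e: "real (2*m+1) * pi / 2 = real m * pi + pi/2" by (simp add: field_simps)
  show ?thesis unfolding e cos_add by simp
qed

lemma sin_even_half: "sin (real (2*m+2) * pi / 2) = 0"
proof -
  have "real (2*m+2) * pi / 2 = real (m+1) * pi" by (simp add: field_simps)
  thus ?thesis by (simp only: sin_npi)
qed

lemma cos_even_half: "cos (real (2*m+2) * pi / 2) = (-1)^(m+1)"
proof -
  have "real (2*m+2) * pi / 2 = real (m+1) * pi" by (simp add: field_simps)
  thus ?thesis by (simp only: cos_npi)
qed

lemma summable_inv_pow: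
  assumes "2 \<le> j"
  shows "summable (\<lambda>k. 1 / real (k+1)^j)"
proof -
  have "summable (\<lambda>n. inverse (real n ^ j))" using inverse_power_summable[OF assms] by simp
  from summable_ignore_initial_segment[OF this, of 1] show ?thesis by (simp add: inverse_eq_divide)
qed



lemma SC:
  assumes "2 \<le> j"
  shows "(\<lambda>k. (-1)^k / real (k+1)^j) sums zetaE j"
proof -
  have "summable (\<lambda>k. (-1)^k / real (k+1)^j)"
    by (rule summable_comparison_test'[OF summable_inv_pow[OF assms]]) (simp add: abs_divide)
  thus ?thesis unfolding zetaE_def by (simp add: summable_sums)
qed

lemma SA:
  assumes "2 \<le> j"
  shows "(\<lambda>k. (-1)^k * sin (real (k+1) * pi / 2) / real (k+1)^j) sums dbeta j"
proof -
  define f where "f k = (-1)^k * sin (real (k+1) * pi / 2) / real (k+1)^j" for k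
  have sm: "strict_mono (\<lambda>m::nat. 2*m)" by (simp add: strict_mono_def)
  have z: "f n = 0" if "n \<notin> range (\<lambda>m. 2*m)" for n
  proof -
    from that have "odd n" by (auto elim!: evenE)
    then obtain m where n: "n = 2*m+1" by (auto elim!: oddE)
    have "real (n+1) = real (2*m+2)" using n by simp
    thus ?thesis unfolding f_def by (simp only: sin_even_half)
  qed
  have fe: "f (2*m) = (-1)^m / real (2*m+1)^j" for m
    unfolding f_def by (simp add: sin_odd_half[of m, simplified])
  have "summable (\<lambda>m. (-1)^m / real (2*m+1)^j)"
  proof (rule summable_comparison_test'[OF summable_inv_pow[OF assms]])
    fix m :: nat
    have "real (m+1)^j \<le> real (2*m+1)^j" by (intro power_mono) auto
    moreover have "0 < real (m+1)^j" by simp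
    ultimately show "norm ((-1)^m / real (2*m+1)^j) \<le> 1 / real (m+1)^j"
      by (simp add: abs_divide frac_le)
  qed
  hence "(\<lambda>m. f (2*m)) sums dbeta j" unfolding fe dbeta_def by (simp add: summable_sums)
  hence "f sums dbeta j" using sums_mono_reindex[of "\<lambda>m. 2*m" f "dbeta j", OF sm z] by blast
  thus ?thesis unfolding f_def[abs_def] .
qed

lemma SB:
  assumes "2 \<le> j"
  shows "(\<lambda>k. (-1)^k * cos (real (k+1) * pi / 2) / real (k+1)^j) sums (zetaE j / 2^j)"
proof -
  define f where "f k = (-1)^k * cos (real (k+1) * pi / 2) / real (k+1)^j" for k
  have sm: "strict_mono (\<lambda>m::nat. 2*m+1)" by (simp add: strict_mono_def)
  have z: "f n = 0" if "n \<notin> range (\<lambda>m. 2*m+1)" for n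
  proof -
    have "even n"
    proof (rule ccontr)
      assume "odd n"
      then obtain m where "n = 2*m+1" by (auto elim!: oddE)
      with that show False by auto
    qed
    then obtain m where n: "n = 2*m" by (auto elim!: evenE)
    have "real (n+1) = real (2*m+1)" using n by simp
    thus ?thesis unfolding f_def by (simp only: cos_odd_half)
  qed
  have fe: "f (2*m+1) = ((-1)^m / real (m+1)^j) / 2^j" for m
  proof -
    have "real (2*m+1+1) = real (2*m+2)" by simp
    moreover have "real (2*m+2)^j = 2^j * real (m+1)^j"
      by (simp add: power_mult_distrib[symmetric] algebra_simps)
    ultimately show ?thesis unfolding f_def using cos_even_half[of m]
      by (simp add: power_add)
  qed
  have "(\<lambda>m. (-1)^m / real (m+1)^j) sums zetaE j" using SC[OF assms] .
  hence "(\<lambda>m. f (2*m+1)) sums (zetaE j / 2^j)" unfolding fe by (rule sums_divide)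
  hence "f sums (zetaE j / 2^j)" using sums_mono_reindex[of "\<lambda>m. 2*m+1" f "zetaE j / 2^j", OF sm z] by blast
  thus ?thesis unfolding f_def[abs_def] .
qed



lemma int_lncos:
  assumes E: "integral {0..1/4} (\<lambda>x. x^j * ln (2 * cos (pi*x))) = E"
  shows "integral {0..1/4} (\<lambda>x. x^j * ln (cos (pi*x))) = E - ln 2 * (1/4)^(j+1) / real (j+1)"
proof -
  have cont: "continuous_on {0..1/4} (\<lambda>x. x^j * ln (2 * cos (pi*x)))"
  proof (intro continuous_intros ballI)
    fix x :: real assume "x \<in> {0..1/4}"
    hence "cos (pi*x) > 0" by (intro cos_pos_quarter) auto
    thus "2 * cos (pi*x) \<noteq> 0" by simp
  qed
  have I1: "((\<lambda>x. x^j * ln (2 * cos (pi*x))) has_integral E) {0..1/4}"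
    using integrable_integral[OF integrable_continuous_interval[OF cont]] E by simp
  have I2: "((\<lambda>x. x^j * ln 2) has_integral (ln 2 * (1/4)^(j+1) / real (j+1) - ln 2 * 0^(j+1) / real (j+1))) {0..1/4}"
  proof (rule ftc_real)
    fix x :: real
    show "((\<lambda>x. ln 2 * x^(j+1) / real (j+1)) has_real_derivative x^j * ln 2) (at x)"
      by (auto intro!: derivative_eq_intros simp del: power_Suc)
  qed simp
  have "((\<lambda>x. x^j * ln (2 * cos (pi*x)) - x^j * ln 2) has_integral (E - ln 2 * (1/4)^(j+1) / real (j+1))) {0..1/4}"
    using has_integral_diff[OF I1 I2] by simp
  hence "((\<lambda>x. x^j * ln (cos (pi*x))) has_integral (E - ln 2 * (1/4)^(j+1) / real (j+1))) {0..1/4}"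
  proof (rule has_integral_eq[rotated])
    fix x :: real assume "x \<in> {0..1/4}"
    hence "cos (pi*x) > 0" by (intro cos_pos_quarter) auto
    hence "ln (2 * cos (pi*x)) = ln 2 + ln (cos (pi*x))" by (simp add: ln_mult)
    thus "x^j * ln (2 * cos (pi*x)) - x^j * ln 2 = x^j * ln (cos (pi*x))" by (simp add: algebra_simps)
  qed
  thus ?thesis by (rule integral_unique)
qed

lemma ln_cos_quarter: "ln (cos (pi/4)) = - ln 2 / 2"
proof -
  have "ln (cos (pi/4)) = ln (sqrt 2) - ln 2" by (simp add: cos_45 ln_div)
  also have "ln (sqrt 2) = ln 2 / 2" by (simp add: ln_sqrt)
  finally show ?thesis by simp
qed



definition ww :: "nat \<Rightarrow> real" where "ww k = real (k+1) * (2*pi)"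

lemma ww_nz: "ww k \<noteq> 0" unfolding ww_def by simp

lemma ww_fun: "(\<lambda>x. x^j * cos (ww k * x)) = (\<lambda>x. x^j * cos (real (k+1) * (2*pi*x)))"
  unfolding ww_def by (simp only: mult.assoc)

lemma ww_quarter: "ww k * (1/4) = real (k+1) * pi / 2"
  unfolding ww_def by simp

lemma E0: "integral {0..1/4} (\<lambda>x. x^0 * ln (2 * cos (pi*x))) = dbeta 2 / (2*pi)"
proof (rule fourier_integral)
  fix k
  show "((\<lambda>x. x^0 * cos (real (k+1) * (2*pi*x))) has_integral (sin (ww k * (1/4)) / ww k)) {0..1/4}"
    using cos_int0[OF ww_nz[of k]] unfolding ww_fun .
next
  have "(\<lambda>k. (1/(2*pi)) * ((-1)^k * sin (real (k+1) * pi / 2) / real (k+1)^2)) sums ((1/(2*pi)) * dbeta 2)"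
    by (intro sums_mult SA) simp
  moreover have "(-1)^k / real (k+1) * (sin (ww k * (1/4)) / ww k) =
        (1/(2*pi)) * ((-1)^k * sin (real (k+1) * pi / 2) / real (k+1)^2)" for k
    unfolding ww_quarter unfolding ww_def by (simp add: field_simps power2_eq_square)
  ultimately show "(\<lambda>k. (-1)^k / real (k+1) * (sin (ww k * (1/4)) / ww k)) sums (dbeta 2 / (2*pi))"
    by simp
qed


lemma alg1:
  fixes K sg sn cs :: real assumes K: "K \<noteq> 0"
  shows "sg / K * ((1/4) * sn / (K*(2*pi)) + (cs - 1)/(K*(2*pi))^2) =
    (1/(8*pi)) * (sg * sn / K^2) + (1/(4*pi^2)) * (sg * cs / K^3) - (1/(4*pi^2)) * (sg / K^3)"
  using K pi_gt_zero by (simp add: field_simps power2_eq_square power3_eq_cube)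

lemma alg2:
  fixes K sg sn cs :: real assumes K: "K \<noteq> 0"
  shows "sg / K * ((1/4)^2 * sn / (K*(2*pi)) + 2*(1/4) * cs / (K*(2*pi))^2 - 2 * sn / (K*(2*pi))^3) =
    (1/(32*pi)) * (sg * sn / K^2) + (1/(8*pi^2)) * (sg * cs / K^3) - (1/(4*pi^3)) * (sg * sn / K^4)"
  using K pi_gt_zero by (simp add: field_simps power2_eq_square power3_eq_cube power4_eq_xxxx)

lemma alg3:
  fixes K sg sn cs :: real assumes K: "K \<noteq> 0"
  shows "sg / K * ((1/4)^3 * sn / (K*(2*pi)) + 3*(1/4)^2 * cs / (K*(2*pi))^2 - 6*(1/4) * sn / (K*(2*pi))^3
       - 6*(cs - 1)/(K*(2*pi))^4) =
    (1/(128*pi)) * (sg * sn / K^2) + (3/(64*pi^2)) * (sg * cs / K^3) - (3/(16*pi^3)) * (sg * sn / K^4)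
      - (3/(8*pi^4)) * (sg * cs / K^5) + (3/(8*pi^4)) * (sg / K^5)"
proof -
  have p5: "K^5 = K*K*K*K*K" by (simp add: numeral_eq_Suc)
  show ?thesis
    unfolding p5 using K pi_gt_zero by (simp add: field_simps power2_eq_square power3_eq_cube power4_eq_xxxx)
qed


lemma E1: "integral {0..1/4} (\<lambda>x. x^1 * ln (2 * cos (pi*x))) =
   (1/(8*pi)) * dbeta 2 + (1/(4*pi^2)) * (zetaE 3 / 2^3) - (1/(4*pi^2)) * zetaE 3"
proof (rule fourier_integral)
  fix k
  show "((\<lambda>x. x^1 * cos (real (k+1) * (2*pi*x))) has_integral
     ((1/4) * sin (ww k * (1/4)) / ww k + (cos (ww k * (1/4)) - 1) / (ww k)^2)) {0..1/4}"
    using cos_int1[OF ww_nz[of k]] unfolding ww_fun .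
next
  let ?A = "\<lambda>k. (-1)^k * sin (real (k+1) * pi / 2) / real (k+1)^2"
  let ?B = "\<lambda>k. (-1)^k * cos (real (k+1) * pi / 2) / real (k+1)^3"
  let ?C = "\<lambda>k. (-1)^k / real (k+1)^3"
  have "(\<lambda>k. (1/(8*pi)) * ?A k + (1/(4*pi^2)) * ?B k - (1/(4*pi^2)) * ?C k) sums
      ((1/(8*pi)) * dbeta 2 + (1/(4*pi^2)) * (zetaE 3 / 2^3) - (1/(4*pi^2)) * zetaE 3)"
    by (intro sums_diff sums_add sums_mult SA SB SC) simp_all
  moreover have "(-1)^k / real (k+1) * ((1/4) * sin (ww k * (1/4)) / ww k + (cos (ww k * (1/4)) - 1) / (ww k)^2)
      = (1/(8*pi)) * ?A k + (1/(4*pi^2)) * ?B k - (1/(4*pi^2)) * ?C k" for k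
    unfolding ww_quarter unfolding ww_def by (rule alg1) simp
  ultimately show "(\<lambda>k. (-1)^k / real (k+1) * ((1/4) * sin (ww k * (1/4)) / ww k + (cos (ww k * (1/4)) - 1) / (ww k)^2))
     sums ((1/(8*pi)) * dbeta 2 + (1/(4*pi^2)) * (zetaE 3 / 2^3) - (1/(4*pi^2)) * zetaE 3)"
    by simp
qed

lemma E2: "integral {0..1/4} (\<lambda>x. x^2 * ln (2 * cos (pi*x))) =
   (1/(32*pi)) * dbeta 2 + (1/(8*pi^2)) * (zetaE 3 / 2^3) - (1/(4*pi^3)) * dbeta 4"
proof (rule fourier_integral)
  fix k
  show "((\<lambda>x. x^2 * cos (real (k+1) * (2*pi*x))) has_integral
     ((1/4)^2 * sin (ww k * (1/4)) / ww k + 2*(1/4) * cos (ww k * (1/4)) / (ww k)^2 - 2 * sin (ww k * (1/4)) / (ww k)^3)) {0..1/4}"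
    using cos_int2[OF ww_nz[of k]] unfolding ww_fun .
next
  let ?A = "\<lambda>k. (-1)^k * sin (real (k+1) * pi / 2) / real (k+1)^2"
  let ?B = "\<lambda>k. (-1)^k * cos (real (k+1) * pi / 2) / real (k+1)^3"
  let ?A4 = "\<lambda>k. (-1)^k * sin (real (k+1) * pi / 2) / real (k+1)^4"
  have "(\<lambda>k. (1/(32*pi)) * ?A k + (1/(8*pi^2)) * ?B k - (1/(4*pi^3)) * ?A4 k) sums
      ((1/(32*pi)) * dbeta 2 + (1/(8*pi^2)) * (zetaE 3 / 2^3) - (1/(4*pi^3)) * dbeta 4)"
    by (intro sums_diff sums_add sums_mult SA SB SC) simp_all
  moreover have "(-1)^k / real (k+1) * ((1/4)^2 * sin (ww k * (1/4)) / ww k + 2*(1/4) * cos (ww k * (1/4)) / (ww k)^2 - 2 * sin (ww k * (1/4)) / (ww k)^3)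
      = (1/(32*pi)) * ?A k + (1/(8*pi^2)) * ?B k - (1/(4*pi^3)) * ?A4 k" for k
    unfolding ww_quarter unfolding ww_def by (rule alg2) simp
  ultimately show "(\<lambda>k. (-1)^k / real (k+1) * ((1/4)^2 * sin (ww k * (1/4)) / ww k + 2*(1/4) * cos (ww k * (1/4)) / (ww k)^2 - 2 * sin (ww k * (1/4)) / (ww k)^3))
     sums ((1/(32*pi)) * dbeta 2 + (1/(8*pi^2)) * (zetaE 3 / 2^3) - (1/(4*pi^3)) * dbeta 4)"
    by simp
qed

lemma E3: "integral {0..1/4} (\<lambda>x. x^3 * ln (2 * cos (pi*x))) =
   (1/(128*pi)) * dbeta 2 + (3/(64*pi^2)) * (zetaE 3 / 2^3) - (3/(16*pi^3)) * dbeta 4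
     - (3/(8*pi^4)) * (zetaE 5 / 2^5) + (3/(8*pi^4)) * zetaE 5"
proof (rule fourier_integral)
  fix k
  show "((\<lambda>x. x^3 * cos (real (k+1) * (2*pi*x))) has_integral
     ((1/4)^3 * sin (ww k * (1/4)) / ww k + 3*(1/4)^2 * cos (ww k * (1/4)) / (ww k)^2 - 6*(1/4) * sin (ww k * (1/4)) / (ww k)^3
       - 6*(cos (ww k * (1/4)) - 1) / (ww k)^4)) {0..1/4}"
    using cos_int3[OF ww_nz[of k]] unfolding ww_fun .
next
  let ?A = "\<lambda>k. (-1)^k * sin (real (k+1) * pi / 2) / real (k+1)^2"
  let ?B = "\<lambda>k. (-1)^k * cos (real (k+1) * pi / 2) / real (k+1)^3"
  let ?A4 = "\<lambda>k. (-1)^k * sin (real (k+1) * pi / 2) / real (k+1)^4"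
  let ?B5 = "\<lambda>k. (-1)^k * cos (real (k+1) * pi / 2) / real (k+1)^5"
  let ?C5 = "\<lambda>k. (-1)^k / real (k+1)^5"
  have "(\<lambda>k. (1/(128*pi)) * ?A k + (3/(64*pi^2)) * ?B k - (3/(16*pi^3)) * ?A4 k
      - (3/(8*pi^4)) * ?B5 k + (3/(8*pi^4)) * ?C5 k) sums
      ((1/(128*pi)) * dbeta 2 + (3/(64*pi^2)) * (zetaE 3 / 2^3) - (3/(16*pi^3)) * dbeta 4
     - (3/(8*pi^4)) * (zetaE 5 / 2^5) + (3/(8*pi^4)) * zetaE 5)"
    by (intro sums_diff sums_add sums_mult SA SB SC) simp_all
  moreover have "(-1)^k / real (k+1) * ((1/4)^3 * sin (ww k * (1/4)) / ww k + 3*(1/4)^2 * cos (ww k * (1/4)) / (ww k)^2 - 6*(1/4) * sin (ww k * (1/4)) / (ww k)^3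
       - 6*(cos (ww k * (1/4)) - 1) / (ww k)^4)
      = (1/(128*pi)) * ?A k + (3/(64*pi^2)) * ?B k - (3/(16*pi^3)) * ?A4 k
      - (3/(8*pi^4)) * ?B5 k + (3/(8*pi^4)) * ?C5 k" for k
    unfolding ww_quarter unfolding ww_def by (rule alg3) simp
  ultimately show "(\<lambda>k. (-1)^k / real (k+1) * ((1/4)^3 * sin (ww k * (1/4)) / ww k + 3*(1/4)^2 * cos (ww k * (1/4)) / (ww k)^2 - 6*(1/4) * sin (ww k * (1/4)) / (ww k)^3
       - 6*(cos (ww k * (1/4)) - 1) / (ww k)^4))
     sums ((1/(128*pi)) * dbeta 2 + (3/(64*pi^2)) * (zetaE 3 / 2^3) - (3/(16*pi^3)) * dbeta 4
     - (3/(8*pi^4)) * (zetaE 5 / 2^5) + (3/(8*pi^4)) * zetaE 5)"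
    by simp
qed



lemma logC_eval:
  assumes "integral {0..1/4} (\<lambda>x. x^j * ln (2 * cos (pi*x))) = E"
  shows "logC (Suc (Suc j)) (1/4) = complex_of_real ((1/4)^(j+1) * ln 2 / 2 - real (j+1) * E)"
proof -
  have "logC (Suc (Suc j)) (1/4) = complex_of_real ((1/4)^(j+1) * (- ln 2 / 2)
      - real (j+1) * (E - ln 2 * (1/4)^(j+1) / real (j+1)))"
    unfolding logC_real int_lncos[OF assms] ln_cos_quarter ..
  also have "(1/4)^(j+1) * (- ln 2 / 2) - real (j+1) * (E - ln 2 * (1/4)^(j+1) / real (j+1))
      = (1/4)^(j+1) * ln 2 / 2 - real (j+1) * E"
  proof -
    define q :: real where "q = (1/4)^(j+1)"
    define n :: real where "n = real (j+1)"
    have n: "n \<noteq> 0" unfolding n_def by simp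
    have "n * (ln 2 * q / n) = ln 2 * q" using n by simp
    hence "q * (- ln 2 / 2) - n * (E - ln 2 * q / n) = q * ln 2 / 2 - n * E"
      by (simp add: algebra_simps)
    thus ?thesis unfolding q_def n_def .
  qed
  finally show ?thesis .
qed

theorem corollary2p6:
  shows "(logC 2 (1/4) = complex_of_real (ln 2 / 8 - catalan / (2 * pi))) \<and>
          (logC 3 (1/4) = complex_of_real (ln 2 / 32 - catalan / (4 * pi)
                          + 7 * zetaE 3 / (16 * pi ^ 2))) \<and>
          (logC 4 (1/4) = complex_of_real (ln 2 / 128 - 3 * catalan / (32 * pi)
                          - 3 * zetaE 3 / (64 * pi ^ 2) + 3 * dbeta 4 / (4 * pi ^ 3))) \<and>
          (logC 5 (1/4) = complex_of_real (ln 2 / 512 - catalan / (32 * pi)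
                          - 3 * zetaE 3 / (128 * pi ^ 2) + 3 * dbeta 4 / (4 * pi ^ 3)
                          - 93 * zetaE 5 / (64 * pi ^ 4)))"
proof (intro conjI)
  have p: "pi \<noteq> 0" by simp
  have "logC 2 (1/4) = logC (Suc (Suc 0)) (1/4)" by (simp add: numeral_2_eq_2)
  also have "\<dots> = complex_of_real ((1/4)^(0+1) * ln 2 / 2 - real (0+1) * (dbeta 2 / (2*pi)))"
    by (rule logC_eval[OF E0])
  also have "(1/4)^(0+1) * ln 2 / 2 - real (0+1) * (dbeta 2 / (2*pi)) = ln 2 / 8 - catalan / (2 * pi)"
    unfolding catalan_def by simp
  finally show "logC 2 (1/4) = complex_of_real (ln 2 / 8 - catalan / (2 * pi))" .
next
  have p: "pi \<noteq> 0" by simp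
  have "logC 3 (1/4) = logC (Suc (Suc 1)) (1/4)" by (simp add: numeral_3_eq_3)
  also have "\<dots> = complex_of_real ((1/4)^(1+1) * ln 2 / 2 - real (1+1) *
      ((1/(8*pi)) * dbeta 2 + (1/(4*pi^2)) * (zetaE 3 / 2^3) - (1/(4*pi^2)) * zetaE 3))"
    by (rule logC_eval[OF E1])
  also have "(1/4)^(1+1) * ln 2 / 2 - real (1+1) *
      ((1/(8*pi)) * dbeta 2 + (1/(4*pi^2)) * (zetaE 3 / 2^3) - (1/(4*pi^2)) * zetaE 3)
     = ln 2 / 32 - catalan / (4 * pi) + 7 * zetaE 3 / (16 * pi ^ 2)"
    unfolding catalan_def using p by (simp add: field_simps)
  finally show "logC 3 (1/4) = complex_of_real (ln 2 / 32 - catalan / (4 * pi) + 7 * zetaE 3 / (16 * pi ^ 2))" .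
next
  have p: "pi \<noteq> 0" by simp
  have "logC 4 (1/4) = logC (Suc (Suc 2)) (1/4)" by (simp add: numeral_eq_Suc)
  also have "\<dots> = complex_of_real ((1/4)^(2+1) * ln 2 / 2 - real (2+1) *
      ((1/(32*pi)) * dbeta 2 + (1/(8*pi^2)) * (zetaE 3 / 2^3) - (1/(4*pi^3)) * dbeta 4))"
    by (rule logC_eval[OF E2])
  also have "(1/4)^(2+1) * ln 2 / 2 - real (2+1) *
      ((1/(32*pi)) * dbeta 2 + (1/(8*pi^2)) * (zetaE 3 / 2^3) - (1/(4*pi^3)) * dbeta 4)
     = ln 2 / 128 - 3 * catalan / (32 * pi) - 3 * zetaE 3 / (64 * pi ^ 2) + 3 * dbeta 4 / (4 * pi ^ 3)"
    unfolding catalan_def using p by (simp add: field_simps)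
  finally show "logC 4 (1/4) = complex_of_real (ln 2 / 128 - 3 * catalan / (32 * pi)
                          - 3 * zetaE 3 / (64 * pi ^ 2) + 3 * dbeta 4 / (4 * pi ^ 3))" .
next
  have p: "pi \<noteq> 0" by simp
  have "logC 5 (1/4) = logC (Suc (Suc 3)) (1/4)" by (simp add: numeral_eq_Suc)
  also have "\<dots> = complex_of_real ((1/4)^(3+1) * ln 2 / 2 - real (3+1) *
      ((1/(128*pi)) * dbeta 2 + (3/(64*pi^2)) * (zetaE 3 / 2^3) - (3/(16*pi^3)) * dbeta 4
     - (3/(8*pi^4)) * (zetaE 5 / 2^5) + (3/(8*pi^4)) * zetaE 5))"
    by (rule logC_eval[OF E3])
  also have "(1/4)^(3+1) * ln 2 / 2 - real (3+1) *
      ((1/(128*pi)) * dbeta 2 + (3/(64*pi^2)) * (zetaE 3 / 2^3) - (3/(16*pi^3)) * dbeta 4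
     - (3/(8*pi^4)) * (zetaE 5 / 2^5) + (3/(8*pi^4)) * zetaE 5)
     = ln 2 / 512 - catalan / (32 * pi) - 3 * zetaE 3 / (128 * pi ^ 2) + 3 * dbeta 4 / (4 * pi ^ 3)
                          - 93 * zetaE 5 / (64 * pi ^ 4)"
    unfolding catalan_def using p by (simp add: field_simps)
  finally show "logC 5 (1/4) = complex_of_real (ln 2 / 512 - catalan / (32 * pi)
                          - 3 * zetaE 3 / (128 * pi ^ 2) + 3 * dbeta 4 / (4 * pi ^ 3)
                          - 93 * zetaE 5 / (64 * pi ^ 4))" .
qed


end
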